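(* Let $A$ be a commutative noetherian local ring and let $x,y\in A$ be a regular exact pair of zero divisors. Let $a,b\in A$ be such that (1) $a$ or $b$ is weakly regular on the $A$-module $A/(x,y)$, and (2) $a$ and $b$ are not both units. Then the $A$-modules $G_a$ and $H_b$ are not isomorphic.
   Context: Two non-units $x,y\in A$ form an exact pair of zero divisors if $\operatorname{Ann}_A(x)=(y)$ and $\operatorname{Ann}_A(y)=(x)$; such a pair is regular if $(x)\cap(y)=0$. An element $a\in A$ is weakly regular on a module $M$ if multiplication by $a$ on $M$ is injective. For $a\in A$, let $\gamma_a=\begin{pmatrix} x & a\\ 0 & y\end{pmatrix}$ and $\eta_a=\begin{pmatrix} y & -a\\ 0 & x\end{pmatrix}$, viewed as $A$-linear maps $A^2\to A^2$ acting on column vectors, and set $G_a=\operatorname{Coker}\gamma_a$, $H_a=\operatorname{Coker}\eta_a$. *)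

theory Defs
  imports Main
begin

definition is_ideal :: "'a::comm_ring_1 set \<Rightarrow> bool" where
  "is_ideal I \<longleftrightarrow> 0 \<in> I \<and> (\<forall>u\<in>I. \<forall>v\<in>I. u + v \<in> I) \<and> (\<forall>r. \<forall>u\<in>I. r * u \<in> I)"

definition gen_ideal :: "'a::comm_ring_1 list \<Rightarrow> 'a set" where
  "gen_ideal gs = {\<Sum>i<length gs. c i * gs ! i | c. True}"

definition noetherian_ring :: "'a::comm_ring_1 itself \<Rightarrow> bool" where
  "noetherian_ring _ \<longleftrightarrow> (\<forall>I::'a set. is_ideal I \<longrightarrow> (\<exists>gs. I = gen_ideal gs))"

definition maximal_ideal :: "'a::comm_ring_1 set \<Rightarrow> bool" where
  "maximal_ideal M \<longleftrightarrow> is_ideal M \<and> M \<noteq> UNIV \<and>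
     (\<forall>J. is_ideal J \<and> M \<subseteq> J \<longrightarrow> J = M \<or> J = UNIV)"

definition local_ring :: "'a::comm_ring_1 itself \<Rightarrow> bool" where
  "local_ring _ \<longleftrightarrow> (\<exists>!M::'a set. maximal_ideal M)"

definition principal :: "'a::comm_ring_1 \<Rightarrow> 'a set" where
  "principal x = {x * r | r. True}"

definition Ann :: "'a::comm_ring_1 \<Rightarrow> 'a set" where
  "Ann x = {r. x * r = 0}"

definition exact_pair :: "'a::comm_ring_1 \<Rightarrow> 'a \<Rightarrow> bool" where
  "exact_pair x y \<longleftrightarrow> \<not> x dvd 1 \<and> \<not> y dvd 1 \<and> Ann x = principal y \<and> Ann y = principal x"

definition regular_exact_pair :: "'a::comm_ring_1 \<Rightarrow> 'a \<Rightarrow> bool" where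
  "regular_exact_pair x y \<longleftrightarrow> exact_pair x y \<and> principal x \<inter> principal y = {0}"

definition weakly_regular_quot2 :: "'a::comm_ring_1 \<Rightarrow> 'a \<Rightarrow> 'a \<Rightarrow> bool" where
  "weakly_regular_quot2 a x y \<longleftrightarrow> (\<forall>r. a * r \<in> gen_ideal [x, y] \<longrightarrow> r \<in> gen_ideal [x, y])"

text \<open>A 2x2 matrix (rows (m11,m12),(m21,m22)) acting on column vectors in A^2 = A \<times> A.\<close>
definition mat2_apply :: "('a::comm_ring_1 \<times> 'a) \<times> ('a \<times> 'a) \<Rightarrow> 'a \<times> 'a \<Rightarrow> 'a \<times> 'a" where
  "mat2_apply M v = (fst (fst M) * fst v + snd (fst M) * snd v,
                     fst (snd M) * fst v + snd (snd M) * snd v)"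

definition gamma_mat :: "'a::comm_ring_1 \<Rightarrow> 'a \<Rightarrow> 'a \<Rightarrow> ('a \<times> 'a) \<times> ('a \<times> 'a)" where
  "gamma_mat x y a = ((x, a), (0, y))"

definition eta_mat :: "'a::comm_ring_1 \<Rightarrow> 'a \<Rightarrow> 'a \<Rightarrow> ('a \<times> 'a) \<times> ('a \<times> 'a)" where
  "eta_mat x y a = ((y, - a), (0, x))"

definition coker_class :: "('a::comm_ring_1 \<times> 'a) \<times> ('a \<times> 'a) \<Rightarrow> 'a \<times> 'a \<Rightarrow> ('a \<times> 'a) set" where
  "coker_class M v = {w. (fst w - fst v, snd w - snd v) \<in> range (mat2_apply M)}"

definition coker :: "('a::comm_ring_1 \<times> 'a) \<times> ('a \<times> 'a) \<Rightarrow> ('a \<times> 'a) set set" where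
  "coker M = range (coker_class M)"

text \<open>Isomorphism of A-modules Coker M \<cong> Coker N: a bijection of the quotients which is A-linear
  (addition and scalar multiplication on classes being computed on representatives).\<close>
definition coker_iso :: "('a::comm_ring_1 \<times> 'a) \<times> ('a \<times> 'a) \<Rightarrow> ('a \<times> 'a) \<times> ('a \<times> 'a) \<Rightarrow> bool" where
  "coker_iso M N \<longleftrightarrow> (\<exists>f. bij_betw f (coker M) (coker N) \<and>
     (\<forall>u v p q. \<forall>c::'a. f (coker_class M u) = coker_class N p \<longrightarrow> f (coker_class M v) = coker_class N q \<longrightarrow>
        f (coker_class M (c * fst u + fst v, c * snd u + snd v)) = coker_class N (c * fst p + fst q, c * snd p + snd q)))"

end

theory Submission imports Defs begin

lemma ideal_UNIV_iff: "is_ideal I \<Longrightarrow> (I = UNIV) = ((1::'a::comm_ring_1) \<in> I)"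
  unfolding is_ideal_def by (metis UNIV_I equalityI mult.right_neutral subsetI)

lemma exists_max:
  fixes r :: "'a::comm_ring_1"
  assumes "\<not> r dvd 1"
  shows "\<exists>M. maximal_ideal M \<and> r \<in> M"
proof -
  define S where "S = {J::'a set. is_ideal J \<and> r \<in> J \<and> 1 \<notin> J}"
  have P: "principal r \<in> S"
  proof -
    have "is_ideal (principal r)"
      unfolding is_ideal_def principal_def
    proof (intro conjI ballI allI)
      show "0 \<in> {r * t |t. True}" by (auto intro: exI[of _ 0])
      fix u v assume "u \<in> {r * t |t. True}" "v \<in> {r * t |t. True}"
      then show "u + v \<in> {r * t |t. True}" by (auto simp: distrib_left[symmetric])
    next
      fix s u assume "u \<in> {r * t |t. True}"
      then show "s * u \<in> {r * t |t. True}" by (auto simp: mult.left_commute)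
    qed
    moreover have "r \<in> principal r" unfolding principal_def by (auto intro: exI[of _ 1])
    moreover have "1 \<notin> principal r" using assms unfolding principal_def by (auto intro: dvdI)
    ultimately show ?thesis unfolding S_def by blast
  qed
  have "\<forall>C\<in>chains S. \<exists>U\<in>S. \<forall>X\<in>C. X \<subseteq> U"
  proof
    fix C assume C: "C \<in> chains S"
    show "\<exists>U\<in>S. \<forall>X\<in>C. X \<subseteq> U"
    proof (cases "C = {}")
      case True then show ?thesis using P by auto
    next
      case False
      have sub: "C \<subseteq> S" using C chainsD2 by blast
      have "\<Union>C \<in> S"
        unfolding S_def is_ideal_def
      proof (intro CollectI conjI ballI allI)
        show "0 \<in> \<Union>C" using False sub unfolding S_def is_ideal_def by blast
        show "r \<in> \<Union>C" using False sub unfolding S_def by blast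
        show "1 \<notin> \<Union>C" using sub unfolding S_def by blast
        fix u v assume u: "u \<in> \<Union>C" and v: "v \<in> \<Union>C"
        then obtain X Y where X: "X \<in> C" "u \<in> X" and Y: "Y \<in> C" "v \<in> Y" by blast
        have "X \<subseteq> Y \<or> Y \<subseteq> X" using chainsD[OF C X(1) Y(1)] .
        then show "u + v \<in> \<Union>C"
          using X Y sub unfolding S_def is_ideal_def by blast
      next
        fix s u assume u: "u \<in> \<Union>C"
        then show "s * u \<in> \<Union>C" using sub unfolding S_def is_ideal_def by blast
      qed
      then show ?thesis by blast
    qed
  qed
  from Zorn_Lemma2[OF this] obtain M where M: "M \<in> S" "\<forall>X\<in>S. M \<subseteq> X \<longrightarrow> X = M" by blast
  have "maximal_ideal M"
    unfolding maximal_ideal_def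
  proof (intro conjI allI impI)
    show "is_ideal M" using M unfolding S_def by blast
    show "M \<noteq> UNIV" using M unfolding S_def by blast
    fix J assume J: "is_ideal J \<and> M \<subseteq> J"
    show "J = M \<or> J = UNIV"
    proof (cases "1 \<in> J")
      case True then show ?thesis using J ideal_UNIV_iff by blast
    next
      case False
      then have "J \<in> S" using J M(1) unfolding S_def by blast
      then show ?thesis using M J by blast
    qed
  qed
  then show ?thesis using M(1) unfolding S_def by blast
qed

lemma nonunit_add:
  fixes r s :: "'a::comm_ring_1"
  assumes "local_ring TYPE('a)" "\<not> r dvd 1" "\<not> s dvd 1"
  shows "\<not> (r + s) dvd 1"
proof
  assume u: "(r + s) dvd 1"
  obtain M where M: "maximal_ideal M" "r \<in> M" using exists_max[OF assms(2)] by blast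
  obtain N where N: "maximal_ideal N" "s \<in> N" using exists_max[OF assms(3)] by blast
  have "M = N" using assms(1) M N unfolding local_ring_def by blast
  then have "r + s \<in> M" using M N unfolding maximal_ideal_def is_ideal_def by blast
  then obtain k where "1 = (r + s) * k" using u by (auto elim: dvdE)
  then have "1 \<in> M" using \<open>r + s \<in> M\<close> M(1) unfolding maximal_ideal_def is_ideal_def
    by (metis mult.commute)
  then show False using M(1) ideal_UNIV_iff unfolding maximal_ideal_def by blast
qed


lemma gen2: "(z::'a::comm_ring_1) \<in> gen_ideal [x, y] \<longleftrightarrow> (\<exists>r s. z = r*x + s*y)"
proof
  assume "z \<in> gen_ideal [x, y]"
  then obtain c where "z = (\<Sum>i<length [x,y]. c i * [x, y] ! i)" unfolding gen_ideal_def by blast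
  then have "z = c 0 * x + c 1 * y" by (simp add: eval_nat_numeral)
  then show "\<exists>r s. z = r*x + s*y" by blast
next
  assume "\<exists>r s. z = r*x + s*y"
  then obtain r s where z: "z = r*x + s*y" by blast
  define c where "c = (\<lambda>i::nat. if i = 0 then r else s)"
  have "z = (\<Sum>i<length [x,y]. c i * [x, y] ! i)" using z by (simp add: c_def eval_nat_numeral)
  then show "z \<in> gen_ideal [x, y]" unfolding gen_ideal_def by blast
qed

lemma unit_plus_nonunit:
  fixes u n :: "'a::comm_ring_1"
  assumes "local_ring TYPE('a)" "u dvd 1" "\<not> n dvd 1"
  shows "(u + n) dvd 1"
proof (rule ccontr)
  assume "\<not> (u + n) dvd 1"
  moreover have "\<not> (- n) dvd 1" using assms(3) by simp
  ultimately have "\<not> ((u + n) + (- n)) dvd 1" using nonunit_add[OF assms(1)] by blast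
  then show False using assms(2) by simp
qed

lemma nonunit_lin:
  fixes x y r s :: "'a::comm_ring_1"
  assumes "local_ring TYPE('a)" "\<not> x dvd 1" "\<not> y dvd 1"
  shows "\<not> (r*x + s*y) dvd 1"
proof -
  have "\<not> (r*x) dvd 1" using assms(2) by (meson dvd_mult_right dvd_trans dvd_refl)
  moreover have "\<not> (s*y) dvd 1" using assms(3) by (meson dvd_mult_right dvd_trans dvd_refl)
  ultimately show ?thesis using nonunit_add[OF assms(1)] by blast
qed

lemma algebra_core:
  fixes x y a b :: "'a::comm_ring_1"
  assumes loc: "local_ring TYPE('a)"
    and rp: "regular_exact_pair x y"
    and wr: "weakly_regular_quot2 a x y \<or> weakly_regular_quot2 b x y"
    and A: "y * q'11 = x * s1 + a * t1" "y * q'21 = y * t1"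
    and B: "- b * q'21 + x * q'22 = y * t2"
    and C: "x * q11 = y * s3 - b * t3" "x * q21 = x * t3"
    and D: "a * q21 + y * q22 = x * t4"
    and E: "q12 * q'21 + q22 * q'22 - 1 = y * t5"
  shows "a dvd 1 \<and> b dvd 1"
proof -
  have xnu: "\<not> x dvd 1" and ynu: "\<not> y dvd 1" and annx: "Ann x = principal y" and anny: "Ann y = principal x"
    and int: "principal x \<inter> principal y = {0}"
    using rp unfolding regular_exact_pair_def exact_pair_def by auto
  have annx': "\<exists>k. z = y * k" if "x * z = 0" for z
    using that annx unfolding Ann_def principal_def by blast
  have anny': "\<exists>k. z = x * k" if "y * z = 0" for z
    using that anny unfolding Ann_def principal_def by blast
  have inter: "x * u = 0" if "x * u = y * v" for u v
  proof -
    have "x * u \<in> principal x" unfolding principal_def by blast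
    moreover have "x * u \<in> principal y" unfolding principal_def using that by blast
    ultimately show ?thesis using int by blast
  qed
  have wra: "\<exists>r s. z = r*x + s*y" if "weakly_regular_quot2 a x y" "a * z = r0*x + s0*y" for z r0 s0
    using that unfolding weakly_regular_quot2_def gen2 by blast
  have wrb: "\<exists>r s. z = r*x + s*y" if "weakly_regular_quot2 b x y" "b * z = r0*x + s0*y" for z r0 s0
    using that unfolding weakly_regular_quot2_def gen2 by blast
  have "\<exists>r s. q'21 = r*x + s*y"
  proof (cases "weakly_regular_quot2 a x y")
    case True
    have "a * t1 = (- s1) * x + q'11 * y" using A(1) by (simp add: algebra_simps)
    then obtain r s where t1: "t1 = r*x + s*y" using wra[OF True] by blast
    have "y * (q'21 - t1) = 0" using A(2) by (simp add: algebra_simps)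
    then obtain k where "q'21 - t1 = x * k" using anny' by blast
    then have "q'21 = (r + k) * x + s * y" using t1 by (simp add: algebra_simps)
    then show ?thesis by blast
  next
    case False
    then have W: "weakly_regular_quot2 b x y" using wr by blast
    have "b * q'21 = q'22 * x + (- t2) * y" using B by (simp add: algebra_simps)
    then show ?thesis using wrb[OF W] by blast
  qed
  then obtain \<alpha> \<beta> where q21': "q'21 = \<alpha>*x + \<beta>*y" by blast
  have "q22 * q'22 = 1 + ((- q12 * \<alpha>) * x + (t5 - q12 * \<beta>) * y)"
    using E q21' by (simp add: algebra_simps)
  moreover have "(1 + ((- q12 * \<alpha>) * x + (t5 - q12 * \<beta>) * y)) dvd 1"
    by (rule unit_plus_nonunit[OF loc dvd_refl nonunit_lin[OF loc xnu ynu]])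
  ultimately have uq: "q22 * q'22 dvd 1" by simp
  then have u22: "q22 dvd 1" and u22': "q'22 dvd 1" by (auto dest: dvd_mult_left dvd_mult_right)
  have "\<exists>r s. q21 = r*x + s*y"
  proof (cases "weakly_regular_quot2 a x y")
    case True
    have "a * q21 = t4 * x + (- q22) * y" using D by (simp add: algebra_simps)
    then show ?thesis using wra[OF True] by blast
  next
    case False
    then have W: "weakly_regular_quot2 b x y" using wr by blast
    have "b * t3 = (- q11) * x + s3 * y" using C(1) by (simp add: algebra_simps)
    then obtain r s where t3: "t3 = r*x + s*y" using wrb[OF W] by blast
    have "x * (q21 - t3) = 0" using C(2) by (simp add: algebra_simps)
    then obtain k where "q21 - t3 = y * k" using annx' by blast
    then have "q21 = r * x + (s + k) * y" using t3 by (simp add: algebra_simps)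
    then show ?thesis by blast
  qed
  then obtain \<gamma> \<delta> where q21: "q21 = \<gamma>*x + \<delta>*y" by blast
  have "x * (t4 - a * \<gamma>) = y * (a * \<delta> + q22)" using D q21 by (simp add: algebra_simps)
  then have "x * (t4 - a * \<gamma>) = 0" using inter by blast
  then have "y * (a * \<delta> + q22) = 0" using \<open>x * (t4 - a * \<gamma>) = y * (a * \<delta> + q22)\<close> by simp
  then obtain k where k: "a * \<delta> + q22 = x * k" using anny' by blast
  have "a * \<delta> = (- q22) + (k * x + 0 * y)" using k by (simp add: algebra_simps)
  moreover have "((- q22) + (k * x + 0 * y)) dvd 1"
    using u22 by (intro unit_plus_nonunit[OF loc _ nonunit_lin[OF loc xnu ynu]]) simp
  ultimately have ua: "a dvd 1" by (metis dvd_mult_left)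
  have "x * (q'22 - b * \<alpha>) = y * (t2 + b * \<beta>)" using B q21' by (simp add: algebra_simps)
  then have "x * (q'22 - b * \<alpha>) = 0" using inter by blast
  then obtain k2 where k2: "q'22 - b * \<alpha> = y * k2" using annx' by blast
  have "b * \<alpha> = q'22 + (0 * x + (- k2) * y)" using k2 by (simp add: algebra_simps)
  moreover have "(q'22 + (0 * x + (- k2) * y)) dvd 1"
    using u22' by (rule unit_plus_nonunit[OF loc _ nonunit_lin[OF loc xnu ynu]])
  ultimately have ub: "b dvd 1" by (metis dvd_mult_left)
  show ?thesis using ua ub by blast
qed


lemma range_mat: "p \<in> range (mat2_apply M) \<longleftrightarrow>
   (\<exists>s t. p = (fst (fst M)*s + snd (fst M)*t, fst (snd M)*s + snd (snd M)*t))"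
  unfolding mat2_apply_def by (auto simp: image_iff)

lemma aux_chain:
  fixes a b c m n :: "'a::comm_ring_1"
  assumes "a - b = m*s + n*t" "c - a = m*s' + n*t'"
  shows "c - b = m*(s+s') + n*(t+t')"
proof -
  have "c - b = (c - a) + (a - b)" by simp
  also have "\<dots> = m*s' + n*t' + (m*s + n*t)" using assms by simp
  also have "\<dots> = m*(s+s') + n*(t+t')" by (simp add: algebra_simps)
  finally show ?thesis .
qed

lemma aux_neg:
  fixes a b m n :: "'a::comm_ring_1"
  assumes "a - b = m*s + n*t"
  shows "b - a = m*(-s) + n*(-t)"
proof -
  have "b - a = - (a - b)" by simp
  also have "\<dots> = m*(-s) + n*(-t)" using assms by simp
  finally show ?thesis .
qed

lemma cc_sub:
  assumes "(fst v - fst w, snd v - snd w) \<in> range (mat2_apply M)"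
  shows "coker_class M v \<subseteq> coker_class M w"
proof
  fix u assume "u \<in> coker_class M v"
  then obtain s' t' where st': "fst u - fst v = fst (fst M)*s' + snd (fst M)*t'"
    "snd u - snd v = fst (snd M)*s' + snd (snd M)*t'" unfolding coker_class_def range_mat by auto
  obtain s t where st: "fst v - fst w = fst (fst M)*s + snd (fst M)*t"
     "snd v - snd w = fst (snd M)*s + snd (snd M)*t" using assms unfolding range_mat by auto
  show "u \<in> coker_class M w"
    using aux_chain[OF st(1) st'(1)] aux_chain[OF st(2) st'(2)]
    unfolding coker_class_def range_mat by blast
qed

lemma cc_eq: "coker_class M v = coker_class M w \<longleftrightarrow> (fst v - fst w, snd v - snd w) \<in> range (mat2_apply M)"
proof
  assume "coker_class M v = coker_class M w"
  moreover have "v \<in> coker_class M v" unfolding coker_class_def range_mat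
    by (auto intro!: exI[of _ 0])
  ultimately show "(fst v - fst w, snd v - snd w) \<in> range (mat2_apply M)"
    unfolding coker_class_def by blast
next
  assume h: "(fst v - fst w, snd v - snd w) \<in> range (mat2_apply M)"
  then obtain s t where st: "fst v - fst w = fst (fst M)*s + snd (fst M)*t"
     "snd v - snd w = fst (snd M)*s + snd (snd M)*t" unfolding range_mat by auto
  have "(fst w - fst v, snd w - snd v) \<in> range (mat2_apply M)"
    using aux_neg[OF st(1)] aux_neg[OF st(2)] unfolding range_mat by blast
  then show "coker_class M v = coker_class M w" using cc_sub h by blast
qed

lemma lin_comb:
  fixes M N :: "('a::comm_ring_1 \<times> 'a) \<times> ('a \<times> 'a)"
  assumes lin: "\<forall>u v p q. \<forall>c::'a. f (coker_class M u) = coker_class N p \<longrightarrow> f (coker_class M v) = coker_class N q \<longrightarrow>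
        f (coker_class M (c * fst u + fst v, c * snd u + snd v)) = coker_class N (c * fst p + fst q, c * snd p + snd q)"
    and h0: "f (coker_class M w0) = coker_class N p0"
    and h1: "f (coker_class M w1) = coker_class N p1"
    and h2: "f (coker_class M w2) = coker_class N p2"
  shows "f (coker_class M (c1 * fst w1 + c2 * fst w2, c1 * snd w1 + c2 * snd w2))
       = coker_class N (c1 * fst p1 + c2 * fst p2, c1 * snd p1 + c2 * snd p2)"
proof -
  have z: "f (coker_class M (0,0)) = coker_class N (0,0)"
    using lin[rule_format, OF h0 h0, of "-1"] by simp
  have s1: "f (coker_class M (c2 * fst w2, c2 * snd w2)) = coker_class N (c2 * fst p2, c2 * snd p2)"
    using lin[rule_format, OF h2 z, of c2] by simp
  show ?thesis using lin[rule_format, OF h1 s1, of c1] by simp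
qed


theorem theorem5p1:
  fixes x y a b :: "'a::comm_ring_1"
  assumes "noetherian_ring TYPE('a)"
    and "local_ring TYPE('a)"
    and "regular_exact_pair x y"
    and "weakly_regular_quot2 a x y \<or> weakly_regular_quot2 b x y"
    and "\<not> (a dvd 1 \<and> b dvd 1)"
  shows "\<not> coker_iso (gamma_mat x y a) (eta_mat x y b)"
proof
  define G where "G = gamma_mat x y a"
  define H where "H = eta_mat x y b"
  assume "coker_iso (gamma_mat x y a) (eta_mat x y b)"
  then obtain f where bij: "bij_betw f (coker G) (coker H)" and
    lin: "\<forall>u v p q. \<forall>c::'a. f (coker_class G u) = coker_class H p \<longrightarrow> f (coker_class G v) = coker_class H q \<longrightarrow>
        f (coker_class G (c * fst u + fst v, c * snd u + snd v)) = coker_class H (c * fst p + fst q, c * snd p + snd q)"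
    unfolding coker_iso_def G_def H_def by blast
  have img: "\<exists>p. f (coker_class G v) = coker_class H p" for v
  proof -
    have "coker_class G v \<in> coker G" unfolding coker_def by blast
    then have "f (coker_class G v) \<in> coker H" using bij_betw_apply[OF bij] by blast
    then show ?thesis unfolding coker_def by blast
  qed
  have sur: "\<exists>v. f (coker_class G v) = coker_class H p" for p
  proof -
    have "coker_class H p \<in> coker H" unfolding coker_def by blast
    then have "coker_class H p \<in> f ` coker G" using bij_betw_imp_surj_on[OF bij] by blast
    then show ?thesis unfolding coker_def by blast
  qed
  have inj: "coker_class G v = coker_class G w" if "f (coker_class G v) = f (coker_class G w)" for v w
    using inj_onD[OF bij_betw_imp_inj_on[OF bij] that] unfolding coker_def by blast
  obtain p1 where p1: "f (coker_class G (1,0)) = coker_class H p1" using img by blast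
  obtain p2 where p2: "f (coker_class G (0,1)) = coker_class H p2" using img by blast
  obtain w1 where w1: "f (coker_class G w1) = coker_class H (1,0)" using sur by blast
  obtain w2 where w2: "f (coker_class G w2) = coker_class H (0,1)" using sur by blast
  note LQ = lin_comb[OF lin p1 p1 p2]
  note LQ' = lin_comb[OF lin p1 w1 w2]
  have z: "f (coker_class G (0,0)) = coker_class H (0,0)" using LQ[of 0 0] by simp
  have K1: "v \<in> range (mat2_apply G)" if "f (coker_class G v) = coker_class H p" "p \<in> range (mat2_apply H)" for v p
  proof -
    have "coker_class H p = coker_class H (0,0)" using that(2) cc_eq[of H p "(0,0)"] by simp
    then have "coker_class G v = coker_class G (0,0)" using that(1) z inj by metis
    then show ?thesis using cc_eq[of G v "(0,0)"] by simp
  qed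
  have K2: "p \<in> range (mat2_apply H)" if "f (coker_class G v) = coker_class H p" "v \<in> range (mat2_apply G)" for v p
  proof -
    have "coker_class G v = coker_class G (0,0)" using that(2) cc_eq[of G v "(0,0)"] by simp
    then have "coker_class H p = coker_class H (0,0)" using that(1) z by metis
    then show ?thesis using cc_eq[of H p "(0,0)"] by simp
  qed
  have "(y*fst (1::'a,0::'a) + 0*fst (0::'a,1::'a), y*snd (1::'a,0::'a) + 0*snd (0::'a,1::'a)) \<in> range (mat2_apply H)"
    unfolding range_mat H_def eta_mat_def by (rule exI[of _ 1], rule exI[of _ 0], simp)
  from K1[OF LQ'[of y 0] this] obtain s1 t1 where
    "y * fst w1 = x * s1 + a * t1" "y * snd w1 = y * t1"
    unfolding range_mat G_def gamma_mat_def by auto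
  note A = this
  have "(-b*fst (1::'a,0::'a) + x*fst (0::'a,1::'a), -b*snd (1::'a,0::'a) + x*snd (0::'a,1::'a)) \<in> range (mat2_apply H)"
    unfolding range_mat H_def eta_mat_def by (rule exI[of _ 0], rule exI[of _ 1], simp)
  from K1[OF LQ'[of "-b" x] this] obtain s2 t2 where
    B: "- b * snd w1 + x * snd w2 = y * t2"
    unfolding range_mat G_def gamma_mat_def by auto
  have "(x*fst (1::'a,0::'a) + 0*fst (0::'a,1::'a), x*snd (1::'a,0::'a) + 0*snd (0::'a,1::'a)) \<in> range (mat2_apply G)"
    unfolding range_mat G_def gamma_mat_def by (rule exI[of _ 1], rule exI[of _ 0], simp)
  from K2[OF LQ[of x 0] this] obtain s3 t3 where
    "x * fst p1 = y * s3 - b * t3" "x * snd p1 = x * t3"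
    unfolding range_mat H_def eta_mat_def by auto
  note C = this
  have "(a*fst (1::'a,0::'a) + y*fst (0::'a,1::'a), a*snd (1::'a,0::'a) + y*snd (0::'a,1::'a)) \<in> range (mat2_apply G)"
    unfolding range_mat G_def gamma_mat_def by (rule exI[of _ 0], rule exI[of _ 1], simp)
  from K2[OF LQ[of a y] this] obtain s4 t4 where
    D: "a * snd p1 + y * snd p2 = x * t4"
    unfolding range_mat H_def eta_mat_def by auto
  have "f (coker_class G (fst p2 * fst w1 + snd p2 * fst w2, fst p2 * snd w1 + snd p2 * snd w2)) = f (coker_class G (0,1))"
    using LQ'[of "fst p2" "snd p2"] p2 by simp
  then have "coker_class G (fst p2 * fst w1 + snd p2 * fst w2, fst p2 * snd w1 + snd p2 * snd w2) = coker_class G (0,1)"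
    by (rule inj)
  then obtain s5 t5 where E: "fst p2 * snd w1 + snd p2 * snd w2 - 1 = y * t5"
    unfolding cc_eq range_mat G_def gamma_mat_def by auto
  have "a dvd 1 \<and> b dvd 1"
    by (rule algebra_core[OF assms(2,3,4) A B C D E])
  then show False using assms(5) by blast
qed

end
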